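(* Let $G$ be a graph with $n$ vertices and let $\mathcal{C}=\{C_1,\dots,C_k\}$ be a min-max clique covering of $G$ that satisfies simple intersection. Then the compressed cliques graph of $G$ (constructed from $\mathcal{C}$) is isomorphic to $G$ if and only if all of the sets $C_{i,i}$ and $C_{i,j}$, $i,j\in\{1,\dots,k\}$, contain at most one vertex.
   Context: A clique covering of $G$ is a set of cliques such that every edge lies in at least one of them; $\operatorname{cc}(G)$ is the minimum size of one. A min-max clique covering is a clique covering of size $\operatorname{cc}(G)$ consisting of maximal cliques. It has simple intersection if no three distinct cliques of it have a common vertex. For distinct $i,j$ put $C_{i,j}=C_i\cap C_j$ and $C_{i,i}=C_i\setminus\bigcup_{j\ne i}C_j$. The compressed cliques graph with respect to $\mathcal{C}$ has one vertex $v_{i,j}$ for each non-empty set $C_{i,j}$ (including $i=j$), i.e. obtained by contracting each non-empty $C_{i,j}$ to a single vertex, and $v_{i,j}$, $v_{i',j'}$ are adjacent iff $\{i,j\}\cap\{i',j'\}\neq\emptyset$. *)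

theory Defs
  imports Main
begin

definition simple_graph :: "'a set \<Rightarrow> ('a \<Rightarrow> 'a \<Rightarrow> bool) \<Rightarrow> bool" where
  "simple_graph V E \<longleftrightarrow> finite V \<and> (\<forall>u v. E u v \<longrightarrow> u \<in> V \<and> v \<in> V)
     \<and> (\<forall>u v. E u v \<longrightarrow> E v u) \<and> (\<forall>u. \<not> E u u)"

definition is_clique :: "'a set \<Rightarrow> ('a \<Rightarrow> 'a \<Rightarrow> bool) \<Rightarrow> 'a set \<Rightarrow> bool" where
  "is_clique V E K \<longleftrightarrow> K \<subseteq> V \<and> (\<forall>u\<in>K. \<forall>v\<in>K. u \<noteq> v \<longrightarrow> E u v)"

definition maximal_clique :: "'a set \<Rightarrow> ('a \<Rightarrow> 'a \<Rightarrow> bool) \<Rightarrow> 'a set \<Rightarrow> bool" where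
  "maximal_clique V E K \<longleftrightarrow> is_clique V E K \<and> (\<forall>K'. is_clique V E K' \<and> K \<subseteq> K' \<longrightarrow> K' = K)"

definition clique_covering :: "'a set \<Rightarrow> ('a \<Rightarrow> 'a \<Rightarrow> bool) \<Rightarrow> 'a set set \<Rightarrow> bool" where
  "clique_covering V E \<C> \<longleftrightarrow> (\<forall>K\<in>\<C>. is_clique V E K)
     \<and> (\<forall>u v. E u v \<longrightarrow> (\<exists>K\<in>\<C>. u \<in> K \<and> v \<in> K))"

definition cc :: "'a set \<Rightarrow> ('a \<Rightarrow> 'a \<Rightarrow> bool) \<Rightarrow> nat" where
  "cc V E = (LEAST m. \<exists>\<C>. clique_covering V E \<C> \<and> finite \<C> \<and> card \<C> = m)"

definition min_max_clique_covering :: "'a set \<Rightarrow> ('a \<Rightarrow> 'a \<Rightarrow> bool) \<Rightarrow> 'a set set \<Rightarrow> bool" where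
  "min_max_clique_covering V E \<C> \<longleftrightarrow> clique_covering V E \<C> \<and> finite \<C> \<and> card \<C> = cc V E
     \<and> (\<forall>K\<in>\<C>. maximal_clique V E K)"

definition simple_intersection :: "(nat \<Rightarrow> 'a set) \<Rightarrow> nat \<Rightarrow> bool" where
  "simple_intersection C k \<longleftrightarrow> (\<forall>h\<in>{1..k}. \<forall>i\<in>{1..k}. \<forall>j\<in>{1..k}.
      h \<noteq> i \<and> h \<noteq> j \<and> i \<noteq> j \<longrightarrow> C h \<inter> C i \<inter> C j = {})"

definition Cij :: "(nat \<Rightarrow> 'a set) \<Rightarrow> nat \<Rightarrow> nat \<Rightarrow> nat \<Rightarrow> 'a set" where
  "Cij C k i j = (if i = j then C i - (\<Union>l\<in>{1..k} - {i}. C l) else C i \<inter> C j)"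

text \<open>Compressed cliques graph: G with each non-empty C_{i,j} contracted to one vertex v_{i,j}
  (represented as Inl {i,j}); vertices of G lying in no clique of the covering (isolated vertices)
  are kept unchanged (Inr v). v_{i,j}, v_{i',j'} adjacent iff they are distinct and
  {i,j} \<inter> {i',j'} \<noteq> {}.\<close>
definition compressed_vertices :: "'a set \<Rightarrow> (nat \<Rightarrow> 'a set) \<Rightarrow> nat \<Rightarrow> (nat set + 'a) set" where
  "compressed_vertices V C k =
     Inl ` {{i, j} | i j. i \<in> {1..k} \<and> j \<in> {1..k} \<and> Cij C k i j \<noteq> {}}
     \<union> Inr ` (V - (\<Union>l\<in>{1..k}. C l))"

fun compressed_edge :: "nat set + 'a \<Rightarrow> nat set + 'a \<Rightarrow> bool" where
  "compressed_edge (Inl S) (Inl T) \<longleftrightarrow> S \<noteq> T \<and> S \<inter> T \<noteq> {}"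
| "compressed_edge _ _ \<longleftrightarrow> False"

definition graph_isomorphic :: "'a set \<Rightarrow> ('a \<Rightarrow> 'a \<Rightarrow> bool) \<Rightarrow> 'b set \<Rightarrow> ('b \<Rightarrow> 'b \<Rightarrow> bool) \<Rightarrow> bool" where
  "graph_isomorphic V E W F \<longleftrightarrow>
     (\<exists>f. bij_betw f V W \<and> (\<forall>u\<in>V. \<forall>v\<in>V. E u v \<longleftrightarrow> F (f u) (f v)))"

end

theory Submission
  imports Defs
begin

lemma iso_sym:
  assumes "graph_isomorphic V E W F"
  shows "graph_isomorphic W F V E"
proof -
  obtain f where f: "bij_betw f V W" "\<forall>u\<in>V. \<forall>v\<in>V. E u v \<longleftrightarrow> F (f u) (f v)"
    using assms unfolding graph_isomorphic_def by blast
  let ?g = "inv_into V f"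
  have "bij_betw ?g W V" using f(1) by (rule bij_betw_inv_into)
  moreover have "\<forall>u\<in>W. \<forall>v\<in>W. F u v \<longleftrightarrow> E (?g u) (?g v)"
  proof (intro ballI)
    fix u v assume u: "u \<in> W" and v: "v \<in> W"
    have gu: "?g u \<in> V" "f (?g u) = u" using u f(1)
      by (auto simp: bij_betw_def inv_into_into f_inv_into_f)
    have gv: "?g v \<in> V" "f (?g v) = v" using v f(1)
      by (auto simp: bij_betw_def inv_into_into f_inv_into_f)
    show "F u v \<longleftrightarrow> E (?g u) (?g v)" using f(2) gu gv by metis
  qed
  ultimately show ?thesis unfolding graph_isomorphic_def by blast
qed

theorem mainTheorem2:
  fixes V :: "'a set" and E :: "'a \<Rightarrow> 'a \<Rightarrow> bool" and C :: "nat \<Rightarrow> 'a set" and k :: nat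
  assumes "simple_graph V E"
    and "inj_on C {1..k}"
    and "min_max_clique_covering V E (C ` {1..k})"
    and "simple_intersection C k"
  shows "graph_isomorphic (compressed_vertices V C k) compressed_edge V E \<longleftrightarrow>
         (\<forall>i\<in>{1..k}. \<forall>j\<in>{1..k}. card (Cij C k i j) \<le> 1)"
proof -
  define U where "U = (\<Union>l\<in>{1..k}. C l)"
  define P where "P u = {l\<in>{1..k}. u \<in> C l}" for u
  have finV: "finite V" using assms(1) by (simp add: simple_graph_def)
  have cov: "clique_covering V E (C ` {1..k})" using assms(3) by (simp add: min_max_clique_covering_def)
  have CV: "C l \<subseteq> V" if "l \<in> {1..k}" for l
    using cov that unfolding clique_covering_def is_clique_def by blast
  have UV: "U \<subseteq> V" using CV unfolding U_def by blast
  have finU: "finite U" using UV finV finite_subset by blast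
  have si: "C h \<inter> C i \<inter> C j = {}" if "h \<in> {1..k}" "i \<in> {1..k}" "j \<in> {1..k}"
      "h \<noteq> i" "h \<noteq> j" "i \<noteq> j" for h i j
    using assms(4) that unfolding simple_intersection_def by blast
  have key: "Cij C k i j = {u \<in> U. P u = {i,j}}" if "i \<in> {1..k}" "j \<in> {1..k}" for i j
  proof (cases "i = j")
    case True
    have "u \<in> C i - (\<Union>l\<in>{1..k} - {i}. C l) \<longleftrightarrow> u \<in> U \<and> P u = {i}" for u
    proof
      assume u: "u \<in> C i - (\<Union>l\<in>{1..k} - {i}. C l)"
      have "P u = {i}"
      proof
        show "P u \<subseteq> {i}" using u unfolding P_def by blast
        show "{i} \<subseteq> P u" using u that(1) unfolding P_def by blast
      qed
      moreover have "u \<in> U" using u that(1) unfolding U_def by blast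
      ultimately show "u \<in> U \<and> P u = {i}" by blast
    next
      assume u: "u \<in> U \<and> P u = {i}"
      then have "i \<in> P u" by simp
      then have "u \<in> C i" unfolding P_def by simp
      moreover have "u \<notin> C l" if "l \<in> {1..k} - {i}" for l
      proof
        assume "u \<in> C l"
        then have "l \<in> P u" using that unfolding P_def by simp
        then show False using u that by simp
      qed
      ultimately show "u \<in> C i - (\<Union>l\<in>{1..k} - {i}. C l)" by blast
    qed
    then show ?thesis using True unfolding Cij_def by auto
  next
    case False
    have "u \<in> C i \<inter> C j \<longleftrightarrow> u \<in> U \<and> P u = {i,j}" for u
    proof
      assume u: "u \<in> C i \<inter> C j"
      have "P u = {i,j}"
      proof
        show "P u \<subseteq> {i,j}"
        proof
          fix l assume "l \<in> P u"
          then have l: "l \<in> {1..k}" "u \<in> C l" unfolding P_def by auto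
          show "l \<in> {i,j}"
          proof (rule ccontr)
            assume "l \<notin> {i,j}"
            then have "C l \<inter> C i \<inter> C j = {}" using si[OF l(1) that] False by auto
            then show False using u l by auto
          qed
        qed
        show "{i,j} \<subseteq> P u" using u that unfolding P_def by auto
      qed
      then show "u \<in> U \<and> P u = {i,j}" using u that unfolding U_def by auto
    next
      assume "u \<in> U \<and> P u = {i,j}"
      then show "u \<in> C i \<inter> C j" unfolding P_def by auto
    qed
    then show ?thesis using False unfolding Cij_def by auto
  qed
  have Pform: "\<exists>i j. i \<in> {1..k} \<and> j \<in> {1..k} \<and> P u = {i,j}" if uU: "u \<in> U" for u
  proof -
    obtain i where i: "i \<in> {1..k}" "u \<in> C i" using uU unfolding U_def by blast
    have iP: "i \<in> P u" using i unfolding P_def by blast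
    show ?thesis
    proof (cases "P u = {i}")
      case True then show ?thesis using i by blast
    next
      case False
      then obtain j where j: "j \<in> P u" "j \<noteq> i" using iP by blast
      have j1: "j \<in> {1..k}" "u \<in> C j" using j(1) unfolding P_def by simp_all
      have "P u \<subseteq> {i,j}"
      proof
        fix l assume lP: "l \<in> P u"
        have l1: "l \<in> {1..k}" "u \<in> C l" using lP unfolding P_def by simp_all
        show "l \<in> {i,j}"
        proof (rule ccontr)
          assume "l \<notin> {i,j}"
          then have "l \<noteq> i" "l \<noteq> j" by simp_all
          from si[OF l1(1) i(1) j1(1) this j(2)[symmetric]]
          have "C l \<inter> C i \<inter> C j = {}" .
          then show False using l1(2) i(2) j1(2) by blast
        qed
      qed
      moreover have "{i,j} \<subseteq> P u" using iP j(1) by blast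
      ultimately have "P u = {i,j}" by (rule subset_antisym)
      then show ?thesis using i(1) j1(1) by blast
    qed
  qed
  have Lset: "{{i, j} | i j. i \<in> {1..k} \<and> j \<in> {1..k} \<and> Cij C k i j \<noteq> {}} = P ` U"
  proof
    show "{{i, j} | i j. i \<in> {1..k} \<and> j \<in> {1..k} \<and> Cij C k i j \<noteq> {}} \<subseteq> P ` U"
      using key by fastforce
    show "P ` U \<subseteq> {{i, j} | i j. i \<in> {1..k} \<and> j \<in> {1..k} \<and> Cij C k i j \<noteq> {}}"
    proof
      fix s assume "s \<in> P ` U"
      then obtain u where u: "u \<in> U" "s = P u" by auto
      obtain i j where ij: "i \<in> {1..k}" "j \<in> {1..k}" "P u = {i,j}" using Pform[OF u(1)] by auto
      have "u \<in> Cij C k i j" using key[OF ij(1,2)] u ij by auto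
      then show "s \<in> {{i, j} | i j. i \<in> {1..k} \<and> j \<in> {1..k} \<and> Cij C k i j \<noteq> {}}"
        using u ij by blast
    qed
  qed
  have W: "compressed_vertices V C k = Inl ` (P ` U) \<union> Inr ` (V - U)"
    unfolding compressed_vertices_def Lset U_def by simp
  have cardW: "card (compressed_vertices V C k) = card (P ` U) + card (V - U)"
    unfolding W using finU finV
    by (subst card_Un_disjoint) (auto simp: card_image)
  have cardV: "card V = card U + card (V - U)"
    using finV UV by (metis card_Diff_subset finite_subset card_mono le_add_diff_inverse)
  have cardle: "card (Cij C k i j) \<le> 1 \<longleftrightarrow> (\<forall>u\<in>U. \<forall>v\<in>U. P u = {i,j} \<longrightarrow> P v = {i,j} \<longrightarrow> u = v)"
    if "i \<in> {1..k}" "j \<in> {1..k}" for i j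
    using key[OF that] finU by (auto simp: card_le_Suc0_iff_eq)
  show ?thesis
  proof
    assume "graph_isomorphic (compressed_vertices V C k) compressed_edge V E"
    then obtain f where "bij_betw f (compressed_vertices V C k) V"
      unfolding graph_isomorphic_def by blast
    then have "card (compressed_vertices V C k) = card V" by (rule bij_betw_same_card)
    then have "card (P ` U) = card U" using cardW cardV by simp
    then have inj: "inj_on P U" using finU by (simp add: inj_on_iff_eq_card)
    show "\<forall>i\<in>{1..k}. \<forall>j\<in>{1..k}. card (Cij C k i j) \<le> 1"
      using cardle inj by (metis inj_onD)
  next
    assume all: "\<forall>i\<in>{1..k}. \<forall>j\<in>{1..k}. card (Cij C k i j) \<le> 1"
    have inj: "inj_on P U"
    proof
      fix u v assume u: "u \<in> U" and v: "v \<in> U" and eq: "P u = P v"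
      obtain i j where ij: "i \<in> {1..k}" "j \<in> {1..k}" "P u = {i,j}" using Pform[OF u] by auto
      show "u = v" using cardle[OF ij(1,2)] all ij u v eq by metis
    qed
    define f where "f u = (if u \<in> U then Inl (P u) else Inr u)" for u
    have bij: "bij_betw f V (compressed_vertices V C k)"
      unfolding bij_betw_def
    proof
      show "inj_on f V" using inj unfolding inj_on_def f_def by auto
      show "f ` V = compressed_vertices V C k"
        unfolding W f_def using UV by auto
    qed
    have sym: "E u v \<longleftrightarrow> E v u" for u v using assms(1) unfolding simple_graph_def by blast
    have irr: "\<not> E u u" for u using assms(1) unfolding simple_graph_def by blast
    have Ecov: "E u v \<Longrightarrow> \<exists>l\<in>{1..k}. u \<in> C l \<and> v \<in> C l" for u v
      using cov unfolding clique_covering_def by blast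
    have Ecl: "\<lbrakk>l \<in> {1..k}; u \<in> C l; v \<in> C l; u \<noteq> v\<rbrakk> \<Longrightarrow> E u v" for l u v
      using cov unfolding clique_covering_def is_clique_def by blast
    have edges: "\<forall>u\<in>V. \<forall>v\<in>V. E u v \<longleftrightarrow> compressed_edge (f u) (f v)"
    proof (intro ballI)
      fix u v assume "u \<in> V" "v \<in> V"
      show "E u v \<longleftrightarrow> compressed_edge (f u) (f v)"
      proof (cases "u \<in> U \<and> v \<in> U")
        case True
        have "E u v \<longleftrightarrow> u \<noteq> v \<and> (\<exists>l\<in>{1..k}. u \<in> C l \<and> v \<in> C l)"
          using Ecov Ecl irr by blast
        also have "\<dots> \<longleftrightarrow> P u \<noteq> P v \<and> P u \<inter> P v \<noteq> {}"
          using inj True unfolding inj_on_def P_def by blast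
        finally show ?thesis using True unfolding f_def by simp
      next
        case False
        then have "\<not> E u v" using Ecov unfolding U_def by blast
        moreover have "\<not> compressed_edge (f u) (f v)"
          using False unfolding f_def by auto
        ultimately show ?thesis by simp
      qed
    qed
    have "graph_isomorphic V E (compressed_vertices V C k) compressed_edge"
      unfolding graph_isomorphic_def using bij edges by blast
    then show "graph_isomorphic (compressed_vertices V C k) compressed_edge V E"
      by (rule iso_sym)
  qed
qed

end
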